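(* Let $H=(V,E)$ be an uncapacitated hypergraph, let $v_1,\ldots,v_n$ be an MA-ordering of $H$, fix a head ordering of the edges, let $k\ge0$ be an integer, and let $H_k$ be the hypergraph obtained from $H$ via this ordering as described in the context. Then $v_1,\ldots,v_n$ is an MA-ordering of $H_k$.
   Context: A hypergraph $H=(V,E)$ has finite vertex set $V$ and a finite multiset $E$ of edges (subsets of $V$), each with capacity $1$. For subsets $A_1,\ldots,A_k$, $d(A_1,\ldots,A_k)$ is the number of edges meeting every $A_i$ (a vertex $v$ stands for $\{v\}$). For an ordering $v_1,\ldots,v_n$, $V_i=\{v_1,\ldots,v_i\}$ ($V_0=\emptyset$); it is an MA-ordering if $d(V_{i-1},v_i)\ge d(V_{i-1},v_j)$ for all $1\le i<j\le n$. The head $h(e)$ of an edge is its vertex of smallest index; a head ordering of the edges is one in which the index of the head is non-decreasing; $e$ is a backward edge of $v$ if $v\in e$ and $h(e)\ne v$; $D_k(v)$ is the set of the first $k$ backward edges of $v$ in the head ordering (all of them if fewer than $k$). For $e\in E$ let $e'=\{v\in e: e\in D_k(v)\}\cup\{h(e)\}$, and $H_k=(V,E_k)$ where $E_k$ is the multiset $\{e' : e\in E, |e'|\ge2\}$. *)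

theory Defs
  imports Main
begin

text \<open>A hypergraph with vertex ordering vs (a distinct list enumerating V, vs ! 0 = v_1, ...)
and edges given as a list es of sets. The list es represents the multiset E of edges
(duplicates allowed, each entry one edge of capacity 1); its order is the edge ordering.\<close>

definition dd :: "'a set list \<Rightarrow> 'a set \<Rightarrow> 'a set \<Rightarrow> nat" where
  "dd es A B = length (filter (\<lambda>e. e \<inter> A \<noteq> {} \<and> e \<inter> B \<noteq> {}) es)"

text \<open>MA-ordering (0-based): V_{i-1} = set (take i vs), v_i = vs ! i.\<close>
definition is_MA_ordering :: "'a list \<Rightarrow> 'a set list \<Rightarrow> bool" where
  "is_MA_ordering vs es \<longleftrightarrow>
     (\<forall>i j. i < j \<and> j < length vs \<longrightarrow>
        dd es (set (take i vs)) {vs ! i} \<ge> dd es (set (take i vs)) {vs ! j})"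

definition head_idx :: "'a list \<Rightarrow> 'a set \<Rightarrow> nat" where
  "head_idx vs e = (LEAST i. i < length vs \<and> vs ! i \<in> e)"

definition head :: "'a list \<Rightarrow> 'a set \<Rightarrow> 'a" where
  "head vs e = vs ! head_idx vs e"

definition is_head_ordering :: "'a list \<Rightarrow> 'a set list \<Rightarrow> bool" where
  "is_head_ordering vs es \<longleftrightarrow> sorted (map (head_idx vs) es)"

definition backward :: "'a list \<Rightarrow> 'a set list \<Rightarrow> 'a \<Rightarrow> nat \<Rightarrow> bool" where
  "backward vs es v j \<longleftrightarrow> j < length es \<and> v \<in> es ! j \<and> head vs (es ! j) \<noteq> v"

definition Dk :: "nat \<Rightarrow> 'a list \<Rightarrow> 'a set list \<Rightarrow> 'a \<Rightarrow> nat set" where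
  "Dk k vs es v = {j. backward vs es v j \<and> card {j'. j' < j \<and> backward vs es v j'} < k}"

definition edge_k :: "nat \<Rightarrow> 'a list \<Rightarrow> 'a set list \<Rightarrow> nat \<Rightarrow> 'a set" where
  "edge_k k vs es j = {v \<in> es ! j. j \<in> Dk k vs es v} \<union> {head vs (es ! j)}"

definition Hk_edges :: "nat \<Rightarrow> 'a list \<Rightarrow> 'a set list \<Rightarrow> 'a set list" where
  "Hk_edges k vs es = filter (\<lambda>e. card e \<ge> 2) (map (edge_k k vs es) [0..<length es])"

end

theory Submission
  imports Defs
begin

lemma rank_count:
  fixes B :: "nat set"
  assumes "finite B"
  shows "card {j\<in>B. card {j'\<in>B. j' < j} < k} = min k (card B)"
  using assms
proof (induction B rule: finite_linorder_max_induct)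
  case empty
  then show ?case by simp
next
  case (insert b A)
  have r: "\<And>j. j \<in> A \<Longrightarrow> {j'\<in>insert b A. j' < j} = {j'\<in>A. j' < j}"
    using insert.hyps by auto
  have rb: "{j'\<in>insert b A. j' < b} = A" using insert.hyps by auto
  have bA: "b \<notin> A" using insert.hyps by auto
  have eq: "{j\<in>insert b A. card {j'\<in>insert b A. j' < j} < k}
     = {j\<in>A. card {j'\<in>A. j' < j} < k} \<union> (if card A < k then {b} else {})"
    using r rb by auto
  have fin: "finite {j\<in>A. card {j'\<in>A. j' < j} < k}" using insert.hyps by auto
  have cA: "card (insert b A) = Suc (card A)" using bA insert.hyps(1) by simp
  have bS: "b \<notin> {j\<in>A. card {j'\<in>A. j' < j} < k}" using bA by blast
  show ?case
  proof (cases "card A < k")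
    case True
    then have "{j\<in>insert b A. card {j'\<in>insert b A. j' < j} < k}
       = insert b {j\<in>A. card {j'\<in>A. j' < j} < k}" unfolding eq by simp
    then show ?thesis using True cA card_insert_disjoint[OF fin bS] insert.IH by simp
  next
    case False
    then have "{j\<in>insert b A. card {j'\<in>insert b A. j' < j} < k}
       = {j\<in>A. card {j'\<in>A. j' < j} < k}" unfolding eq by simp
    then show ?thesis using False cA insert.IH by simp
  qed
qed

theorem mainTheorem13:
  fixes vs :: "'a list" and es :: "'a set list" and k :: nat
  assumes "distinct vs"
    and "\<forall>e\<in>set es. e \<subseteq> set vs \<and> e \<noteq> {}"
    and "is_MA_ordering vs es"
    and "is_head_ordering vs es"
  shows "is_MA_ordering vs (Hk_edges k vs es)"
proof -
  note dist = assms(1)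
  have hd: "head_idx vs e < length vs \<and> vs ! head_idx vs e \<in> e \<and> (\<forall>i'<head_idx vs e. vs ! i' \<notin> e)"
    if "e \<in> set es" for e
  proof -
    from assms(2) that obtain x where "x \<in> e" "e \<subseteq> set vs" by blast
    then obtain i0 where i0: "i0 < length vs" "vs ! i0 \<in> e" by (metis in_set_conv_nth subsetD)
    have "head_idx vs e < length vs \<and> vs ! head_idx vs e \<in> e"
      unfolding head_idx_def by (rule LeastI[where k=i0]) (use i0 in simp)
    moreover have "\<forall>i'<head_idx vs e. vs ! i' \<notin> e"
    proof (intro allI impI notI)
      fix i' assume a: "i' < head_idx vs e" "vs ! i' \<in> e"
      with \<open>head_idx vs e < length vs \<and> _\<close> have "head_idx vs e \<le> i'"
        unfolding head_idx_def by (intro Least_le) simp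
      with a show False by simp
    qed
    ultimately show ?thesis by blast
  qed
  have meet: "es ! j \<inter> set (take i vs) \<noteq> {} \<longleftrightarrow> head_idx vs (es ! j) < i"
    if "j < length es" for j i
  proof -
    have e: "es ! j \<in> set es" using that by simp
    note h = hd[OF e]
    show ?thesis
    proof
      assume "es ! j \<inter> set (take i vs) \<noteq> {}"
      then obtain x where x: "x \<in> es ! j" "x \<in> set (take i vs)" by blast
      then obtain i' where "i' < length (take i vs)" "take i vs ! i' = x"
        by (metis in_set_conv_nth)
      then have "i' < i" "i' < length vs" "vs ! i' = x" by auto
      with h x show "head_idx vs (es ! j) < i" by (meson not_less order.strict_trans2)
    next
      assume "head_idx vs (es ! j) < i"
      with h have "vs ! head_idx vs (es ! j) \<in> set (take i vs)"
        by (metis in_set_conv_nth length_take min_less_iff_conj nth_take)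
      with h show "es ! j \<inter> set (take i vs) \<noteq> {}" by blast
    qed
  qed
  have sorted: "head_idx vs (es ! j') \<le> head_idx vs (es ! j)" if "j' \<le> j" "j < length es" for j j'
    using assms(4) that unfolding is_head_ordering_def
    by (metis (no_types, lifting) le_less_trans length_map nth_map sorted_iff_nth_mono)
  have key: "dd (Hk_edges k vs es) (set (take i vs)) {vs ! jj} = min k (dd es (set (take i vs)) {vs ! jj})"
    if ij: "i \<le> jj" "jj < length vs" for i jj
  proof -
    define T where "T = set (take i vs)"
    define v where "v = vs ! jj"
    define f where "f = edge_k k vs es"
    define B where "B = {j. backward vs es v j \<and> head_idx vs (es ! j) < i}"
    have hne: "head vs (es ! j) \<noteq> v" if "j < length es" "head_idx vs (es ! j) < i" for j
    proof -
      have "head_idx vs (es ! j) \<noteq> jj" using that ij by simp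
      then show ?thesis unfolding head_def v_def
        using hd[of "es ! j"] that ij dist by (simp add: nth_eq_iff_index_eq)
    qed
    have c1: "dd es T {v} = card B"
    proof -
      have "dd es T {v} = card {j. j < length es \<and> es ! j \<inter> T \<noteq> {} \<and> es ! j \<inter> {v} \<noteq> {}}"
        unfolding dd_def by (simp add: length_filter_conv_card)
      also have "{j. j < length es \<and> es ! j \<inter> T \<noteq> {} \<and> es ! j \<inter> {v} \<noteq> {}} = B"
        unfolding B_def backward_def T_def using meet hne by auto
      finally show ?thesis .
    qed
    have sub: "f j \<subseteq> es ! j" if "j < length es" for j
      unfolding f_def edge_k_def head_def using hd[of "es ! j"] that by auto
    have fin: "finite (f j)" if "j < length es" for j
      using sub[OF that] assms(2) that by (meson finite_set finite_subset nth_mem)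
    have c2: "dd (Hk_edges k vs es) T {v} = card (Dk k vs es v \<inter> B)"
    proof -
      have "dd (Hk_edges k vs es) T {v} =
         card {j. j < length es \<and> 2 \<le> card (f j) \<and> f j \<inter> T \<noteq> {} \<and> f j \<inter> {v} \<noteq> {}}"
        unfolding dd_def Hk_edges_def f_def
        apply (simp add: length_filter_conv_card)
        apply (rule arg_cong[where f=card])
        by auto
      also have "{j. j < length es \<and> 2 \<le> card (f j) \<and> f j \<inter> T \<noteq> {} \<and> f j \<inter> {v} \<noteq> {}}
         = Dk k vs es v \<inter> B"
      proof (intro set_eqI iffI)
        fix j assume "j \<in> {j. j < length es \<and> 2 \<le> card (f j) \<and> f j \<inter> T \<noteq> {} \<and> f j \<inter> {v} \<noteq> {}}"
        then have j: "j < length es" "f j \<inter> T \<noteq> {}" "v \<in> f j" by auto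
        have hi: "head_idx vs (es ! j) < i" using j sub meet[OF j(1)] unfolding T_def by blast
        have "j \<in> Dk k vs es v" using j(3) hne[OF j(1) hi] unfolding f_def edge_k_def by auto
        then show "j \<in> Dk k vs es v \<inter> B" unfolding B_def Dk_def using hi by auto
      next
        fix j assume a: "j \<in> Dk k vs es v \<inter> B"
        then have j: "j < length es" "head_idx vs (es ! j) < i" "v \<in> es ! j"
          unfolding B_def backward_def by auto
        have vf: "v \<in> f j" using a j unfolding f_def edge_k_def by auto
        have hf: "head vs (es ! j) \<in> f j" unfolding f_def edge_k_def by auto
        have hT: "head vs (es ! j) \<in> T"
          using meet[OF j(1), of i] j hd[of "es ! j"] unfolding T_def head_def
          by (metis in_set_conv_nth length_take min_less_iff_conj nth_take)
        have "card {v, head vs (es ! j)} \<le> card (f j)"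
          using vf hf fin[OF j(1)] by (intro card_mono) auto
        then have "2 \<le> card (f j)" using hne[OF j(1,2)] by simp
        then show "j \<in> {j. j < length es \<and> 2 \<le> card (f j) \<and> f j \<inter> T \<noteq> {} \<and> f j \<inter> {v} \<noteq> {}}"
          using j vf hf hT by auto
      qed
      finally show ?thesis .
    qed
    have finB: "finite B" unfolding B_def backward_def by auto
    have down: "{j'. j' < j \<and> backward vs es v j'} = {j'\<in>B. j' < j}" if "j \<in> B" for j
    proof -
      have "head_idx vs (es ! j') < i" if "j' < j" "backward vs es v j'" for j'
        using sorted[of j' j] \<open>j \<in> B\<close> that unfolding B_def backward_def by auto
      then show ?thesis using B_def by auto
    qed
    have "Dk k vs es v \<inter> B = {j\<in>B. card {j'\<in>B. j' < j} < k}"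
      unfolding Dk_def using down B_def by auto
    then have "card (Dk k vs es v \<inter> B) = min k (card B)" using rank_count[OF finB] by simp
    then show ?thesis using c1 c2 unfolding T_def v_def by simp
  qed
  show ?thesis
    unfolding is_MA_ordering_def
  proof (intro allI impI)
    fix i j assume a: "i < j \<and> j < length vs"
    have "dd es (set (take i vs)) {vs ! i} \<ge> dd es (set (take i vs)) {vs ! j}"
      using assms(3) a unfolding is_MA_ordering_def by blast
    then show "dd (Hk_edges k vs es) (set (take i vs)) {vs ! i} \<ge> dd (Hk_edges k vs es) (set (take i vs)) {vs ! j}"
      using key[of i i] key[of i j] a by simp
  qed
qed

end
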